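(* Let $G$ be a finite supersolvable group and let $A$, $B$ be conjugacy classes of $G$ such that $AB\cap \mathbf{Z}(G)\neq\emptyset$. Then $$\operatorname{dl}(G/\mathbf{C}_G(A))\le 2\,\eta(AB)-1.$$
   Context: For a nonempty subset $X\subseteq G$ that is $G$-invariant (i.e. $g^{-1}Xg=X$ for all $g\in G$), $\eta(X)$ denotes the number of distinct conjugacy classes of $G$ whose union is $X$. For conjugacy classes $A,B$, $AB=\{ab\mid a\in A,b\in B\}$ (a $G$-invariant set). $\mathbf{C}_G(A)=\{g\in G\mid g^{-1}ag=a\text{ for all }a\in A\}$, $\mathbf{Z}(G)$ is the center, and $\operatorname{dl}$ denotes derived length. *)

theory Defs
  imports "HOL-Algebra.Algebra"
begin

definition conj_class :: "('a, 'b) monoid_scheme \<Rightarrow> 'a \<Rightarrow> 'a set" where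
  "conj_class G a = {inv\<^bsub>G\<^esub> g \<otimes>\<^bsub>G\<^esub> a \<otimes>\<^bsub>G\<^esub> g | g. g \<in> carrier G}"

definition is_conj_class :: "('a, 'b) monoid_scheme \<Rightarrow> 'a set \<Rightarrow> bool" where
  "is_conj_class G A \<longleftrightarrow> (\<exists>a \<in> carrier G. A = conj_class G a)"

text \<open>eta(X): number of conjugacy classes of G contained in X
  (for a G-invariant X, these are exactly the classes whose union is X).\<close>
definition eta :: "('a, 'b) monoid_scheme \<Rightarrow> 'a set \<Rightarrow> nat" where
  "eta G S = card {K. is_conj_class G K \<and> K \<subseteq> S}"

definition centralizer :: "('a, 'b) monoid_scheme \<Rightarrow> 'a set \<Rightarrow> 'a set" where
  "centralizer G A = {g \<in> carrier G. \<forall>a \<in> A. inv\<^bsub>G\<^esub> g \<otimes>\<^bsub>G\<^esub> a \<otimes>\<^bsub>G\<^esub> g = a}"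

definition center :: "('a, 'b) monoid_scheme \<Rightarrow> 'a set" where
  "center G = centralizer G (carrier G)"

definition derived_length :: "('a, 'b) monoid_scheme \<Rightarrow> nat" where
  "derived_length G = (LEAST n. (derived G ^^ n) (carrier G) = {\<one>\<^bsub>G\<^esub>})"

definition supersolvable :: "('a, 'b) monoid_scheme \<Rightarrow> bool" where
  "supersolvable G \<longleftrightarrow> group G \<and>
     (\<exists>Ns :: 'a set list. Ns \<noteq> [] \<and> hd Ns = {\<one>\<^bsub>G\<^esub>} \<and> last Ns = carrier G \<and>
        (\<forall>N \<in> set Ns. N \<lhd> G) \<and>
        (\<forall>i. Suc i < length Ns \<longrightarrow> Ns ! i \<subseteq> Ns ! Suc i \<and>
             cyclic_group ((G\<lparr>carrier := Ns ! Suc i\<rparr>) Mod (Ns ! i))))"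

end

theory Submission
  imports Defs
begin


lemma (in group) inv_cancel_left1 [simp]:
  "x \<in> carrier G \<Longrightarrow> y \<in> carrier G \<Longrightarrow> x \<otimes> (inv x \<otimes> y) = y"
  by (simp add: m_assoc[symmetric])

lemma (in group) inv_cancel_left2 [simp]:
  "x \<in> carrier G \<Longrightarrow> y \<in> carrier G \<Longrightarrow> inv x \<otimes> (x \<otimes> y) = y"
  by (simp add: m_assoc[symmetric])

lemma (in group) conj_hom: "g \<in> carrier G \<Longrightarrow> (\<lambda>a. inv g \<otimes> a \<otimes> g) \<in> hom G G"
  by (auto simp: hom_def m_assoc)

lemma (in group) conj_int_pow:
  assumes "g \<in> carrier G" "a \<in> carrier G"
  shows "inv g \<otimes> (a [^] (n::int)) \<otimes> g = (inv g \<otimes> a \<otimes> g) [^] n"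
  using hom_int_pow[OF conj_hom[OF assms(1)] assms(2) is_group is_group] by simp

lemma (in group) comm_identity:
  assumes x: "x \<in> carrier G" and y: "y \<in> carrier G" and s: "s \<in> carrier G"
    and eq: "inv y \<otimes> (inv x \<otimes> s \<otimes> x) \<otimes> y = inv x \<otimes> (inv y \<otimes> s \<otimes> y) \<otimes> x"
  shows "inv (x \<otimes> y \<otimes> inv x \<otimes> inv y) \<otimes> s \<otimes> (x \<otimes> y \<otimes> inv x \<otimes> inv y) = s"
proof -
  have "inv (x \<otimes> y \<otimes> inv x \<otimes> inv y) \<otimes> s \<otimes> (x \<otimes> y \<otimes> inv x \<otimes> inv y)
      = y \<otimes> x \<otimes> (inv y \<otimes> (inv x \<otimes> s \<otimes> x) \<otimes> y) \<otimes> inv x \<otimes> inv y"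
    using x y s by (simp add: inv_mult_group m_assoc)
  also have "\<dots> = y \<otimes> x \<otimes> (inv x \<otimes> (inv y \<otimes> s \<otimes> y) \<otimes> x) \<otimes> inv x \<otimes> inv y"
    using eq by simp
  also have "\<dots> = s" using x y s by (simp add: m_assoc)
  finally show ?thesis .
qed

lemma (in group) cyclic_conj_comm:
  assumes M: "subgroup M G" and cyc: "cyclic_group (G\<lparr>carrier := M\<rparr>)"
    and nM: "\<And>g m. g \<in> carrier G \<Longrightarrow> m \<in> M \<Longrightarrow> inv g \<otimes> m \<otimes> g \<in> M"
    and x: "x \<in> carrier G" and y: "y \<in> carrier G" and m: "m \<in> M"
  shows "inv y \<otimes> (inv x \<otimes> m \<otimes> x) \<otimes> y = inv x \<otimes> (inv y \<otimes> m \<otimes> y) \<otimes> x"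
proof -
  interpret Q: group "G\<lparr>carrier := M\<rparr>" using subgroup_imp_group[OF M] .
  obtain c where c: "c \<in> M" and cM: "M = range (\<lambda>n::int. c [^]\<^bsub>G\<lparr>carrier := M\<rparr>\<^esub> n)"
    using cyc unfolding Q.cyclic_group by auto
  have cM': "M = range (\<lambda>n::int. c [^] n)"
    using cM int_pow_consistent[OF M c] by simp
  have cG: "c \<in> carrier G" using c M subgroup.subset by blast
  have "inv x \<otimes> c \<otimes> x \<in> range (\<lambda>n::int. c [^] n)" using nM[OF x c] cM' by simp
  then obtain k :: int where k: "inv x \<otimes> c \<otimes> x = c [^] k" by blast
  have "inv y \<otimes> c \<otimes> y \<in> range (\<lambda>n::int. c [^] n)" using nM[OF y c] cM' by simp
  then obtain l :: int where l: "inv y \<otimes> c \<otimes> y = c [^] l" by blast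
  have "m \<in> range (\<lambda>n::int. c [^] n)" using m cM' by simp
  then obtain j :: int where j: "m = c [^] j" by blast
  have "inv y \<otimes> (inv x \<otimes> m \<otimes> x) \<otimes> y = c [^] (l * k * j)"
    using x y cG by (simp add: j conj_int_pow k l int_pow_pow mult.assoc)
  moreover have "inv x \<otimes> (inv y \<otimes> m \<otimes> y) \<otimes> x = c [^] (k * l * j)"
    using x y cG by (simp add: j conj_int_pow k l int_pow_pow mult.assoc)
  ultimately show ?thesis by (simp add: mult.commute)
qed

lemma (in group) cyclic_comm:
  assumes M: "subgroup M G" and cyc: "cyclic_group (G\<lparr>carrier := M\<rparr>)"
    and p: "p \<in> M" and q: "q \<in> M"
  shows "p \<otimes> q = q \<otimes> p"
proof -
  interpret Q: group "G\<lparr>carrier := M\<rparr>" using subgroup_imp_group[OF M] .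
  obtain c where c: "c \<in> M" and cM: "M = range (\<lambda>n::int. c [^]\<^bsub>G\<lparr>carrier := M\<rparr>\<^esub> n)"
    using cyc unfolding Q.cyclic_group by auto
  have cM': "M = range (\<lambda>n::int. c [^] n)"
    using cM int_pow_consistent[OF M c] by simp
  have cG: "c \<in> carrier G" using c M subgroup.subset by blast
  have "p \<in> range (\<lambda>n::int. c [^] n)" "q \<in> range (\<lambda>n::int. c [^] n)" using p q cM' by auto
  then obtain i j :: int where "p = c [^] i" "q = c [^] j" by blast
  then show ?thesis using cG by (simp add: int_pow_mult[symmetric] add.commute)
qed

lemma (in group) two_step_identity:
  assumes M: "subgroup M G" and comm: "\<And>p q. p \<in> M \<Longrightarrow> q \<in> M \<Longrightarrow> p \<otimes> q = q \<otimes> p"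
    and x: "x \<in> carrier G" and y: "y \<in> carrier G" and s: "s \<in> carrier G"
    and xs: "inv x \<otimes> s \<otimes> x \<otimes> inv s \<in> M" and ys: "inv y \<otimes> s \<otimes> y \<otimes> inv s \<in> M"
    and xM: "\<And>m. m \<in> M \<Longrightarrow> inv x \<otimes> m \<otimes> x = m"
    and yM: "\<And>m. m \<in> M \<Longrightarrow> inv y \<otimes> m \<otimes> y = m"
  shows "inv (x \<otimes> y \<otimes> inv x \<otimes> inv y) \<otimes> s \<otimes> (x \<otimes> y \<otimes> inv x \<otimes> inv y) = s"
proof (rule comm_identity[OF x y s])
  define p where "p = inv x \<otimes> s \<otimes> x \<otimes> inv s"
  define q where "q = inv y \<otimes> s \<otimes> y \<otimes> inv s"
  have pM: "p \<in> M" and qM: "q \<in> M" using xs ys p_def q_def by auto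
  have pG: "p \<in> carrier G" and qG: "q \<in> carrier G" using pM qM M subgroup.subset by auto
  have px: "inv x \<otimes> s \<otimes> x = p \<otimes> s" using x s by (simp add: p_def m_assoc)
  have qy: "inv y \<otimes> s \<otimes> y = q \<otimes> s" using y s by (simp add: q_def m_assoc)
  have "inv y \<otimes> (inv x \<otimes> s \<otimes> x) \<otimes> y = (inv y \<otimes> p \<otimes> y) \<otimes> (inv y \<otimes> s \<otimes> y)"
    using x y s pG by (simp add: px m_assoc)
  also have "\<dots> = p \<otimes> (q \<otimes> s)" using yM[OF pM] qy by simp
  finally have 1: "inv y \<otimes> (inv x \<otimes> s \<otimes> x) \<otimes> y = p \<otimes> q \<otimes> s" using pG qG s by (simp add: m_assoc)
  have "inv x \<otimes> (inv y \<otimes> s \<otimes> y) \<otimes> x = (inv x \<otimes> q \<otimes> x) \<otimes> (inv x \<otimes> s \<otimes> x)"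
    using x y s qG by (simp add: qy m_assoc)
  also have "\<dots> = q \<otimes> (p \<otimes> s)" using xM[OF qM] px by simp
  finally have 2: "inv x \<otimes> (inv y \<otimes> s \<otimes> y) \<otimes> x = q \<otimes> p \<otimes> s" using pG qG s by (simp add: m_assoc)
  show "inv y \<otimes> (inv x \<otimes> s \<otimes> x) \<otimes> y = inv x \<otimes> (inv y \<otimes> s \<otimes> y) \<otimes> x"
    using 1 2 comm[OF pM qM] by simp
qed

definition Xs :: "('a, 'b) monoid_scheme \<Rightarrow> 'a set \<Rightarrow> 'a set \<Rightarrow> 'a set" where
  "Xs G S K = {x \<in> carrier G. \<forall>a\<in>S. inv\<^bsub>G\<^esub> x \<otimes>\<^bsub>G\<^esub> a \<otimes>\<^bsub>G\<^esub> x \<otimes>\<^bsub>G\<^esub> inv\<^bsub>G\<^esub> a \<in> K}"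

lemma (in group) Xs_subgroup:
  assumes K: "K \<lhd> G" and S: "S \<subseteq> carrier G"
    and Sc: "\<And>g a. g \<in> carrier G \<Longrightarrow> a \<in> S \<Longrightarrow> inv g \<otimes> a \<otimes> g \<in> S"
  shows "subgroup (Xs G S K) G"
proof (rule subgroupI)
  interpret K: normal K G using K .
  have KG: "subgroup K G" by (rule K.subgroup_axioms)
  show "Xs G S K \<subseteq> carrier G" by (auto simp: Xs_def)
  have "\<one> \<in> Xs G S K" using S by (auto simp: Xs_def K.one_closed subset_iff)
  then show "Xs G S K \<noteq> {}" by auto
next
  interpret K: normal K G using K .
  fix x assume x: "x \<in> Xs G S K"
  then have xG: "x \<in> carrier G" by (simp add: Xs_def)
  show "inv x \<in> Xs G S K"
    unfolding Xs_def
  proof (intro CollectI conjI ballI)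
    show "inv x \<in> carrier G" using xG by simp
    fix a assume a: "a \<in> S"
    have aG: "a \<in> carrier G" using a S by auto
    define b where "b = x \<otimes> a \<otimes> inv x"
    have b: "b \<in> S" using Sc[of "inv x" a] xG a by (simp add: b_def)
    have bG: "b \<in> carrier G" using b S by auto
    have "inv x \<otimes> b \<otimes> x \<otimes> inv b \<in> K" using x b by (simp add: Xs_def)
    moreover have "inv x \<otimes> b \<otimes> x = a" using xG aG by (simp add: b_def m_assoc)
    ultimately have "a \<otimes> inv b \<in> K" by simp
    then have "inv (a \<otimes> inv b) \<in> K" by (rule K.m_inv_closed)
    then have "b \<otimes> inv a \<in> K" using aG bG by (simp add: inv_mult_group)
    then show "inv (inv x) \<otimes> a \<otimes> inv x \<otimes> inv a \<in> K"
      using xG aG by (simp add: b_def)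
  qed
next
  interpret K: normal K G using K .
  fix x y assume x: "x \<in> Xs G S K" and y: "y \<in> Xs G S K"
  then have xG: "x \<in> carrier G" and yG: "y \<in> carrier G" by (auto simp add: Xs_def)
  show "x \<otimes> y \<in> Xs G S K"
    unfolding Xs_def
  proof (intro CollectI conjI ballI)
    show "x \<otimes> y \<in> carrier G" using xG yG by simp
    fix a assume a: "a \<in> S"
    have aG: "a \<in> carrier G" using a S by auto
    define b where "b = inv x \<otimes> a \<otimes> x"
    have b: "b \<in> S" using Sc[of x a] xG a by (simp add: b_def)
    have bG: "b \<in> carrier G" using b S by auto
    have 1: "inv y \<otimes> b \<otimes> y \<otimes> inv b \<in> K" using y b by (simp add: Xs_def)
    have 2: "b \<otimes> inv a \<in> K" using x a by (simp add: Xs_def b_def)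
    have "(inv y \<otimes> b \<otimes> y \<otimes> inv b) \<otimes> (b \<otimes> inv a) \<in> K" using 1 2 by (rule K.m_closed)
    moreover have "(inv y \<otimes> b \<otimes> y \<otimes> inv b) \<otimes> (b \<otimes> inv a) = inv (x \<otimes> y) \<otimes> a \<otimes> (x \<otimes> y) \<otimes> inv a"
      using xG yG aG bG by (simp add: b_def m_assoc inv_mult_group)
    ultimately show "inv (x \<otimes> y) \<otimes> a \<otimes> (x \<otimes> y) \<otimes> inv a \<in> K" by simp
  qed
qed

lemma Mod_restrict_eq:
  "(G\<lparr>carrier := M\<rparr>) Mod N = (G Mod N)\<lparr>carrier := (\<lambda>a. N #>\<^bsub>G\<^esub> a) ` M\<rparr>"
  unfolding FactGroup_def RCOSETS_def r_coset_def set_mult_def by (simp add: UNION_singleton_eq_range)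

lemma (in group) step_lemma:
  assumes N: "N \<lhd> G" and M: "M \<lhd> G" and NM: "N \<subseteq> M"
    and cyc: "cyclic_group ((G\<lparr>carrier := M\<rparr>) Mod N)"
    and S: "S \<subseteq> carrier G"
    and Sc: "\<And>g a. g \<in> carrier G \<Longrightarrow> a \<in> S \<Longrightarrow> inv g \<otimes> a \<otimes> g \<in> S"
  shows "derived G (derived G (Xs G S M)) \<subseteq> Xs G S N"
proof -
  interpret Nn: normal N G using N .
  interpret Mn: normal M G using M .
  define H where "H = G Mod N"
  define \<pi> where "\<pi> = (\<lambda>a. N #> a)"
  interpret H: group H unfolding H_def by (rule Nn.factorgroup_is_group)
  have hom: "\<pi> \<in> hom G H" unfolding \<pi>_def H_def by (rule Nn.r_coset_hom_Mod)
  interpret Hh: group_hom G H \<pi> by (unfold_locales) (rule hom)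
  have one_H: "\<one>\<^bsub>H\<^esub> = N" by (simp add: H_def)
  have NG: "subgroup N G" by (rule Nn.subgroup_axioms)
  have inN: "u \<in> N \<longleftrightarrow> \<pi> u = \<one>\<^bsub>H\<^esub>" if u: "u \<in> carrier G" for u
  proof
    assume "u \<in> N" then show "\<pi> u = \<one>\<^bsub>H\<^esub>" using coset_join2[OF u NG] by (simp add: one_H \<pi>_def)
  next
    assume "\<pi> u = \<one>\<^bsub>H\<^esub>" then have "N #> u = N" by (simp add: one_H \<pi>_def)
    then show "u \<in> N" using coset_join1[OF _ u NG] by blast
  qed
  define Mb where "Mb = \<pi> ` M"
  have MG: "M \<subseteq> carrier G" by (rule Mn.subset)
  have Mb: "subgroup Mb H" unfolding Mb_def by (rule Hh.subgroup_img_is_subgroup[OF Mn.subgroup_axioms])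
  have cycb: "cyclic_group (H\<lparr>carrier := Mb\<rparr>)"
    using cyc by (simp add: Mod_restrict_eq H_def Mb_def \<pi>_def)
  have Mbc: "inv\<^bsub>H\<^esub> g \<otimes>\<^bsub>H\<^esub> m \<otimes>\<^bsub>H\<^esub> g \<in> Mb" if gH: "g \<in> carrier H" and mH: "m \<in> Mb" for g m
  proof -
    obtain g0 where g0: "g0 \<in> carrier G" "g = \<pi> g0"
      using gH unfolding H_def \<pi>_def carrier_FactGroup by blast
    obtain m0 where m0: "m0 \<in> M" "m = \<pi> m0" using mH by (auto simp: Mb_def)
    have "inv g0 \<otimes> m0 \<otimes> g0 \<in> M" by (rule Mn.inv_op_closed1[OF g0(1) m0(1)])
    moreover have "\<pi> (inv g0 \<otimes> m0 \<otimes> g0) = inv\<^bsub>H\<^esub> g \<otimes>\<^bsub>H\<^esub> m \<otimes>\<^bsub>H\<^esub> g"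
      using g0 m0 MG by auto
    ultimately show ?thesis unfolding Mb_def by (metis image_eqI)
  qed
  have XSM: "subgroup (Xs G S M) G" by (rule Xs_subgroup[OF M S Sc])
  have XSN: "subgroup (Xs G S N) G" by (rule Xs_subgroup[OF N S Sc])
  have XMN: "subgroup (Xs G M N) G"
    by (rule Xs_subgroup[OF N MG]) (rule Mn.inv_op_closed1)
  define Y where "Y = Xs G S M \<inter> Xs G M N"
  have YG: "subgroup Y G" unfolding Y_def by (rule subgroups_Inter_pair[OF XSM XMN])
  have A: "derived_set G (Xs G S M) \<subseteq> Y"
  proof
    fix c assume "c \<in> derived_set G (Xs G S M)"
    then obtain x y where x: "x \<in> Xs G S M" and y: "y \<in> Xs G S M"
      and c: "c = x \<otimes> y \<otimes> inv x \<otimes> inv y" by blast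
    have xG: "x \<in> carrier G" and yG: "y \<in> carrier G" using x y by (auto simp: Xs_def)
    have c1: "c \<in> Xs G S M"
      using c x y XSM by (simp add: subgroup.m_closed subgroup.m_inv_closed)
    have cG: "c \<in> carrier G" using c xG yG by simp
    have "c \<in> Xs G M N"
      unfolding Xs_def
    proof (intro CollectI conjI ballI)
      show "c \<in> carrier G" by (rule cG)
      fix m assume m: "m \<in> M"
      have mG: "m \<in> carrier G" using m MG by auto
      have "\<pi> m \<in> Mb" using m by (simp add: Mb_def)
      then have "inv\<^bsub>H\<^esub> (\<pi> x \<otimes>\<^bsub>H\<^esub> \<pi> y \<otimes>\<^bsub>H\<^esub> inv\<^bsub>H\<^esub> (\<pi> x) \<otimes>\<^bsub>H\<^esub> inv\<^bsub>H\<^esub> (\<pi> y)) \<otimes>\<^bsub>H\<^esub> \<pi> m \<otimes>\<^bsub>H\<^esub> (\<pi> x \<otimes>\<^bsub>H\<^esub> \<pi> y \<otimes>\<^bsub>H\<^esub> inv\<^bsub>H\<^esub> (\<pi> x) \<otimes>\<^bsub>H\<^esub> inv\<^bsub>H\<^esub> (\<pi> y)) = \<pi> m"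
        using xG yG mG
        by (intro H.comm_identity H.cyclic_conj_comm[OF Mb cycb Mbc]) auto
      then have "inv\<^bsub>H\<^esub> (\<pi> c) \<otimes>\<^bsub>H\<^esub> \<pi> m \<otimes>\<^bsub>H\<^esub> \<pi> c = \<pi> m"
        unfolding c using xG yG by simp
      then have "\<pi> (inv c \<otimes> m \<otimes> c \<otimes> inv m) = \<one>\<^bsub>H\<^esub>"
        using cG mG by simp
      moreover have "inv c \<otimes> m \<otimes> c \<otimes> inv m \<in> carrier G" using cG mG by simp
      ultimately show "inv c \<otimes> m \<otimes> c \<otimes> inv m \<in> N" using inN by blast
    qed
    then show "c \<in> Y" using c1 by (simp add: Y_def)
  qed
  have B: "derived_set G Y \<subseteq> Xs G S N"
  proof
    fix c assume "c \<in> derived_set G Y"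
    then obtain x y where x: "x \<in> Y" and y: "y \<in> Y"
      and c: "c = x \<otimes> y \<otimes> inv x \<otimes> inv y" by blast
    have xG: "x \<in> carrier G" and yG: "y \<in> carrier G" using x y by (auto simp: Y_def Xs_def)
    have cG: "c \<in> carrier G" using c xG yG by simp
    have comm: "\<And>p q. p \<in> Mb \<Longrightarrow> q \<in> Mb \<Longrightarrow> p \<otimes>\<^bsub>H\<^esub> q = q \<otimes>\<^bsub>H\<^esub> p"
      by (rule H.cyclic_comm[OF Mb cycb])
    have zM: "\<And>m. m \<in> Mb \<Longrightarrow> inv\<^bsub>H\<^esub> (\<pi> z) \<otimes>\<^bsub>H\<^esub> m \<otimes>\<^bsub>H\<^esub> \<pi> z = m" if z: "z \<in> Y" for z
    proof -
      fix m assume "m \<in> Mb"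
      then obtain m0 where m0: "m0 \<in> M" "m = \<pi> m0" by (auto simp: Mb_def)
      have zG: "z \<in> carrier G" using z by (auto simp: Y_def Xs_def)
      have m0G: "m0 \<in> carrier G" using m0 MG by auto
      have "inv z \<otimes> m0 \<otimes> z \<otimes> inv m0 \<in> N" using z m0 by (auto simp: Y_def Xs_def)
      moreover have "inv z \<otimes> m0 \<otimes> z \<otimes> inv m0 \<in> carrier G" using zG m0G by simp
      ultimately have "\<pi> (inv z \<otimes> m0 \<otimes> z \<otimes> inv m0) = \<one>\<^bsub>H\<^esub>" using inN by blast
      then have "\<pi> (inv z \<otimes> m0 \<otimes> z) \<otimes>\<^bsub>H\<^esub> inv\<^bsub>H\<^esub> (\<pi> m0) = \<one>\<^bsub>H\<^esub>" using zG m0G by simp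
      then have "\<pi> (inv z \<otimes> m0 \<otimes> z) = \<pi> m0"
        using zG m0G by (metis H.inv_equality H.inv_inv Hh.hom_closed H.inv_closed m_closed inv_closed)
      then show "inv\<^bsub>H\<^esub> (\<pi> z) \<otimes>\<^bsub>H\<^esub> m \<otimes>\<^bsub>H\<^esub> \<pi> z = m" using zG m0G m0 by simp
    qed
    have "c \<in> Xs G S N"
      unfolding Xs_def
    proof (intro CollectI conjI ballI)
      show "c \<in> carrier G" by (rule cG)
      fix a assume a: "a \<in> S"
      have aG: "a \<in> carrier G" using a S by auto
      have sx: "inv\<^bsub>H\<^esub> (\<pi> z) \<otimes>\<^bsub>H\<^esub> \<pi> a \<otimes>\<^bsub>H\<^esub> \<pi> z \<otimes>\<^bsub>H\<^esub> inv\<^bsub>H\<^esub> (\<pi> a) \<in> Mb" if z: "z \<in> Y" for z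
      proof -
        have zG: "z \<in> carrier G" using z by (auto simp: Y_def Xs_def)
        have "inv z \<otimes> a \<otimes> z \<otimes> inv a \<in> M" using z a by (auto simp: Y_def Xs_def)
        then have "\<pi> (inv z \<otimes> a \<otimes> z \<otimes> inv a) \<in> Mb" by (simp add: Mb_def)
        then show ?thesis using zG aG by simp
      qed
      have "inv\<^bsub>H\<^esub> (\<pi> x \<otimes>\<^bsub>H\<^esub> \<pi> y \<otimes>\<^bsub>H\<^esub> inv\<^bsub>H\<^esub> (\<pi> x) \<otimes>\<^bsub>H\<^esub> inv\<^bsub>H\<^esub> (\<pi> y)) \<otimes>\<^bsub>H\<^esub> \<pi> a \<otimes>\<^bsub>H\<^esub> (\<pi> x \<otimes>\<^bsub>H\<^esub> \<pi> y \<otimes>\<^bsub>H\<^esub> inv\<^bsub>H\<^esub> (\<pi> x) \<otimes>\<^bsub>H\<^esub> inv\<^bsub>H\<^esub> (\<pi> y)) = \<pi> a"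
        using xG yG aG
        by (intro H.two_step_identity[OF Mb comm _ _ _ sx[OF x] sx[OF y] zM[OF x] zM[OF y]]) auto
      then have "inv\<^bsub>H\<^esub> (\<pi> c) \<otimes>\<^bsub>H\<^esub> \<pi> a \<otimes>\<^bsub>H\<^esub> \<pi> c = \<pi> a"
        unfolding c using xG yG by simp
      then have "\<pi> (inv c \<otimes> a \<otimes> c \<otimes> inv a) = \<one>\<^bsub>H\<^esub>"
        using cG aG by simp
      moreover have "inv c \<otimes> a \<otimes> c \<otimes> inv a \<in> carrier G" using cG aG by simp
      ultimately show "inv c \<otimes> a \<otimes> c \<otimes> inv a \<in> N" using inN by blast
    qed
    then show "c \<in> Xs G S N" .
  qed
  have "derived G (Xs G S M) \<subseteq> Y"
    unfolding derived_def by (rule generate_subgroup_incl[OF A YG])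
  then have "derived G (derived G (Xs G S M)) \<subseteq> derived G Y" by (rule mono_derived)
  also have "\<dots> \<subseteq> Xs G S N"
    unfolding derived_def by (rule generate_subgroup_incl[OF B XSN])
  finally show ?thesis .
qed



lemma (in group) derived_pow_sub:
  assumes "subgroup H G" shows "(derived G ^^ k) H \<subseteq> H"
proof (induction k)
  case 0 then show ?case by simp
next
  case (Suc k)
  have "subgroup ((derived G ^^ k) H) G" by (rule exp_of_derived_is_subgroup[OF assms])
  then have "derived G ((derived G ^^ k) H) \<subseteq> (derived G ^^ k) H"
    by (intro derived_incl) auto
  then show ?case using Suc by simp
qed

lemma (in group) derived_antitone:
  assumes "m \<le> n" shows "(derived G ^^ n) (carrier G) \<subseteq> (derived G ^^ m) (carrier G)"
proof -
  define k where "k = n - m"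
  have n: "n = k + m" using assms by (simp add: k_def)
  have "(derived G ^^ n) (carrier G) = (derived G ^^ k) ((derived G ^^ m) (carrier G))"
    by (simp add: n funpow_add)
  also have "\<dots> \<subseteq> (derived G ^^ m) (carrier G)"
    by (rule derived_pow_sub[OF exp_of_derived_is_subgroup[OF subgroup_self]])
  finally show ?thesis .
qed

lemma (in group) conj_class_carrier: "conj_class G c \<subseteq> carrier G" if "c \<in> carrier G"
  using that by (auto simp: conj_class_def)

lemma (in group) self_in_conj_class: "c \<in> carrier G \<Longrightarrow> c \<in> conj_class G c"
  unfolding conj_class_def by (rule CollectI, rule exI[of _ \<one>]) simp

lemma (in group) conj_class_closed:
  assumes "y \<in> conj_class G c" "g \<in> carrier G" "c \<in> carrier G"
  shows "inv g \<otimes> y \<otimes> g \<in> conj_class G c"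
proof -
  obtain h where h: "h \<in> carrier G" "y = inv h \<otimes> c \<otimes> h" using assms(1) by (auto simp: conj_class_def)
  have "inv g \<otimes> y \<otimes> g = inv (h \<otimes> g) \<otimes> c \<otimes> (h \<otimes> g)"
    using h assms by (simp add: inv_mult_group m_assoc)
  then show ?thesis using h assms unfolding conj_class_def by blast
qed

lemma (in group) conj_class_sym:
  assumes "y \<in> conj_class G c" "c \<in> carrier G"
  shows "c \<in> conj_class G y"
proof -
  obtain h where h: "h \<in> carrier G" "y = inv h \<otimes> c \<otimes> h" using assms(1) by (auto simp: conj_class_def)
  have "c = inv (inv h) \<otimes> y \<otimes> inv h" using h assms by (simp add: m_assoc)
  then show ?thesis using h unfolding conj_class_def by blast
qed

lemma (in group) conj_class_sub:
  assumes "y \<in> conj_class G c" "c \<in> carrier G"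
  shows "conj_class G y \<subseteq> conj_class G c"
proof
  fix w assume "w \<in> conj_class G y"
  then obtain g where "g \<in> carrier G" "w = inv g \<otimes> y \<otimes> g" by (auto simp: conj_class_def)
  then show "w \<in> conj_class G c" using conj_class_closed[OF assms(1) _ assms(2)] by simp
qed

lemma (in group) finite_classes:
  assumes "finite (carrier G)"
  shows "finite {K. is_conj_class G K \<and> K \<subseteq> T}"
proof (rule finite_subset[of _ "Pow (carrier G)"])
  show "{K. is_conj_class G K \<and> K \<subseteq> T} \<subseteq> Pow (carrier G)"
    using conj_class_carrier by (auto simp: is_conj_class_def)
  show "finite (Pow (carrier G))" using assms by simp
qed

lemma (in group) eta_mono:
  assumes "finite (carrier G)" "S \<subseteq> T"
  shows "eta G S \<le> eta G T"
  unfolding eta_def by (rule card_mono[OF finite_classes[OF assms(1)]]) (use assms(2) in auto)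

lemma (in group) eta_strict:
  assumes fin: "finite (carrier G)" and ST: "S \<subseteq> T" and t: "t \<in> T" "t \<notin> S" "t \<in> carrier G"
    and Tc: "\<And>g. g \<in> carrier G \<Longrightarrow> inv g \<otimes> t \<otimes> g \<in> T"
  shows "eta G S < eta G T"
  unfolding eta_def
proof (rule psubset_card_mono[OF finite_classes[OF fin]])
  have K: "is_conj_class G (conj_class G t)" using t by (auto simp: is_conj_class_def)
  have KT: "conj_class G t \<subseteq> T" using Tc by (auto simp: conj_class_def)
  have KS: "\<not> conj_class G t \<subseteq> S" using self_in_conj_class[OF t(3)] t(2) by auto
  show "{K. is_conj_class G K \<and> K \<subseteq> S} \<subset> {K. is_conj_class G K \<and> K \<subseteq> T}"
    using K KT KS ST by blast
qed

lemma (in group) eta_one: "eta G {\<one>} = 1"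
proof -
  have "{K. is_conj_class G K \<and> K \<subseteq> {\<one>}} = {{\<one>}}"
  proof
    show "{K. is_conj_class G K \<and> K \<subseteq> {\<one>}} \<subseteq> {{\<one>}}"
      using self_in_conj_class by (auto simp: is_conj_class_def)
    have "conj_class G \<one> = {\<one>}" unfolding conj_class_def by (auto intro!: exI[of _ "\<one>"])
    then show "{{\<one>}} \<subseteq> {K. is_conj_class G K \<and> K \<subseteq> {\<one>}}"
      by (auto simp: is_conj_class_def)
  qed
  then show ?thesis by (simp add: eta_def)
qed



lemma (in group) mult_inv_eq_one:
  assumes "b \<in> carrier G" "a \<in> carrier G"
  shows "b \<otimes> inv a = \<one> \<longleftrightarrow> b = a"
proof
  assume h: "b \<otimes> inv a = \<one>"
  have "b = (b \<otimes> inv a) \<otimes> a" using assms by (simp add: m_assoc)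
  then show "b = a" using h assms by simp
next
  assume "b = a" then show "b \<otimes> inv a = \<one>" using assms by simp
qed

lemma (in group) centralizer_normal:
  assumes A: "A \<subseteq> carrier G" and Ac: "\<And>g a. g \<in> carrier G \<Longrightarrow> a \<in> A \<Longrightarrow> inv g \<otimes> a \<otimes> g \<in> A"
  shows "centralizer G A \<lhd> G"
proof -
  have eq: "centralizer G A = Xs G A {\<one>}"
  proof -
    have "inv x \<otimes> a \<otimes> x \<otimes> inv a = \<one> \<longleftrightarrow> inv x \<otimes> a \<otimes> x = a"
      if "x \<in> carrier G" "a \<in> A" for x a
      using that A mult_inv_eq_one[of "inv x \<otimes> a \<otimes> x" a] by auto
    then show ?thesis by (auto simp: centralizer_def Xs_def)
  qed
  have sg: "subgroup (centralizer G A) G"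
    unfolding eq by (rule Xs_subgroup[OF _ A Ac]) (rule one_is_normal)
  show ?thesis
  proof (rule normal_invI[OF sg])
    fix x h assume x: "x \<in> carrier G" and h: "h \<in> centralizer G A"
    have hG: "h \<in> carrier G" using h by (simp add: centralizer_def)
    show "x \<otimes> h \<otimes> inv x \<in> centralizer G A"
      unfolding centralizer_def
    proof (intro CollectI conjI ballI)
      show "x \<otimes> h \<otimes> inv x \<in> carrier G" using x hG by simp
      fix a assume a: "a \<in> A"
      have aG: "a \<in> carrier G" using a A by auto
      have b: "inv x \<otimes> a \<otimes> x \<in> A" using Ac[OF x a] .
      then have hb: "inv h \<otimes> (inv x \<otimes> a \<otimes> x) \<otimes> h = inv x \<otimes> a \<otimes> x" using h by (simp add: centralizer_def)
      have "inv (x \<otimes> h \<otimes> inv x) \<otimes> a \<otimes> (x \<otimes> h \<otimes> inv x)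
          = x \<otimes> (inv h \<otimes> (inv x \<otimes> a \<otimes> x) \<otimes> h) \<otimes> inv x"
        using x hG aG by (simp add: inv_mult_group m_assoc)
      also have "\<dots> = a" using hb x aG by (simp add: m_assoc)
      finally show "inv (x \<otimes> h \<otimes> inv x) \<otimes> a \<otimes> (x \<otimes> h \<otimes> inv x) = a" .
    qed
  qed
qed

lemma (in group) dl_quot_le:
  assumes C: "C \<lhd> G" and sub: "(derived G ^^ n) (carrier G) \<subseteq> C"
  shows "derived_length (G Mod C) \<le> n"
proof -
  interpret Cn: normal C G using C .
  define \<pi> where "\<pi> = (\<lambda>a. C #> a)"
  interpret Q: group "G Mod C" by (rule Cn.factorgroup_is_group)
  interpret Hh: group_hom G "G Mod C" \<pi>
    by unfold_locales (simp add: \<pi>_def Cn.r_coset_hom_Mod)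
  have car: "carrier (G Mod C) = \<pi> ` carrier G" by (simp add: carrier_FactGroup \<pi>_def)
  have "(derived (G Mod C) ^^ n) (carrier (G Mod C)) = \<pi> ` ((derived G ^^ n) (carrier G))"
    unfolding car by (rule Hh.exp_of_derived_img) simp
  also have "\<dots> = {C}"
  proof
    show "\<pi> ` (derived G ^^ n) (carrier G) \<subseteq> {C}"
      using sub coset_join2[OF _ Cn.subgroup_axioms] Cn.subset by (auto simp: \<pi>_def)
    have "\<one> \<in> (derived G ^^ n) (carrier G)"
      using subgroup.one_closed[OF exp_of_derived_is_subgroup[OF subgroup_self]] by simp
    moreover have "\<pi> \<one> = C" using coset_join2[OF one_closed Cn.subgroup_axioms] Cn.one_closed
      by (simp add: \<pi>_def)
    ultimately show "{C} \<subseteq> \<pi> ` (derived G ^^ n) (carrier G)" by force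
  qed
  finally have "(derived (G Mod C) ^^ n) (carrier (G Mod C)) = {\<one>\<^bsub>G Mod C\<^esub>}" by simp
  then show ?thesis unfolding derived_length_def by (rule Least_le)
qed



lemma (in group) centralizer_Xs:
  assumes A: "A \<subseteq> carrier G"
  shows "centralizer G A = Xs G A {\<one>}"
proof -
  have "inv x \<otimes> a \<otimes> x \<otimes> inv a = \<one> \<longleftrightarrow> inv x \<otimes> a \<otimes> x = a"
    if "x \<in> carrier G" "a \<in> A" for x a
    using that A mult_inv_eq_one[of "inv x \<otimes> a \<otimes> x" a] by auto
  then show ?thesis by (auto simp: centralizer_def Xs_def)
qed

lemma (in group) main_result:
  assumes "True" and "finite (carrier G)" and "supersolvable G"
    and "is_conj_class G A" and "is_conj_class G B"
    and "(A <#>\<^bsub>G\<^esub> B) \<inter> center G \<noteq> {}"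
  shows "int (derived_length (G Mod (centralizer G A))) \<le> 2 * int (eta G (A <#>\<^bsub>G\<^esub> B)) - 1"
proof -
  have fin: "finite (carrier G)" by (rule assms(2))
  obtain a1 where a1: "a1 \<in> carrier G" "A = conj_class G a1"
    using assms(4) by (auto simp: is_conj_class_def)
  obtain b1 where b1: "b1 \<in> carrier G" "B = conj_class G b1"
    using assms(5) by (auto simp: is_conj_class_def)
  have AG: "A \<subseteq> carrier G" using conj_class_carrier a1 by simp
  have BG: "B \<subseteq> carrier G" using conj_class_carrier b1 by simp
  have Ac: "\<And>g a. g \<in> carrier G \<Longrightarrow> a \<in> A \<Longrightarrow> inv g \<otimes> a \<otimes> g \<in> A"
    using conj_class_closed a1 by simp
  have Bc: "\<And>g a. g \<in> carrier G \<Longrightarrow> a \<in> B \<Longrightarrow> inv g \<otimes> a \<otimes> g \<in> B"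
    using conj_class_closed b1 by simp
  define D where "D = {v \<otimes> inv u | u v. u \<in> A \<and> v \<in> A}"
  have DG: "D \<subseteq> carrier G" using AG by (auto simp: D_def)
  have Dc: "inv g \<otimes> d \<otimes> g \<in> D" if g: "g \<in> carrier G" and d: "d \<in> D" for g d
  proof -
    obtain u v where uv: "u \<in> A" "v \<in> A" "d = v \<otimes> inv u" using d by (auto simp: D_def)
    have uG: "u \<in> carrier G" and vG: "v \<in> carrier G" using uv AG by auto
    have "inv g \<otimes> d \<otimes> g = (inv g \<otimes> v \<otimes> g) \<otimes> inv (inv g \<otimes> u \<otimes> g)"
      using g uG vG by (simp add: uv(3) inv_mult_group m_assoc)
    then show ?thesis using Ac[OF g uv(1)] Ac[OF g uv(2)] by (auto simp: D_def)
  qed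
  have a1A: "a1 \<in> A" using a1 self_in_conj_class by simp
  have oneD: "\<one> \<in> D"
  proof -
    have "\<one> = a1 \<otimes> inv a1" using a1 by simp
    then show ?thesis using a1A by (auto simp: D_def)
  qed
  have commD: "inv x \<otimes> a \<otimes> x \<otimes> inv a \<in> D" if "x \<in> carrier G" "a \<in> A" for x a
    using Ac[OF that] that(2) by (auto simp: D_def)

  obtain Ns where Ns: "Ns \<noteq> []" "hd Ns = {\<one>}" "last Ns = carrier G" "\<forall>N \<in> set Ns. N \<lhd> G"
    "\<forall>i. Suc i < length Ns \<longrightarrow> Ns ! i \<subseteq> Ns ! Suc i \<and>
             cyclic_group ((G\<lparr>carrier := Ns ! Suc i\<rparr>) Mod (Ns ! i))"
    using assms(3) unfolding supersolvable_def by blast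
  define r where "r = length Ns - 1"
  have N0: "Ns ! 0 = {\<one>}" using Ns(1,2) by (simp add: hd_conv_nth)
  have Nr: "Ns ! r = carrier G" using Ns(1,3) by (simp add: last_conv_nth r_def)
  have Nn: "Ns ! i \<lhd> G" if "i \<le> r" for i
  proof -
    have "0 < length Ns" using Ns(1) by simp
    then have "i < length Ns" using that unfolding r_def by linarith
    then show ?thesis using Ns(4) nth_mem by blast
  qed
  have Nstep: "Ns ! i \<subseteq> Ns ! Suc i \<and> cyclic_group ((G\<lparr>carrier := Ns ! Suc i\<rparr>) Mod (Ns ! i))"
    if "i < r" for i
    using that Ns(5) by (simp add: r_def)
  define e where "e i = 2 * (eta G D - eta G (D \<inter> Ns ! i))" for i
  have etaD: "eta G (D \<inter> Ns ! i) \<le> eta G D" for i by (rule eta_mono[OF fin]) auto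
  have claim: "(derived G ^^ e (r - j)) (carrier G) \<subseteq> Xs G A (Ns ! (r - j))" if "j \<le> r" for j
    using that
  proof (induction j)
    case 0
    have "Xs G A (Ns ! r) = carrier G" using Nr AG by (auto simp: Xs_def)
    then show ?case using exp_of_derived_in_carrier[of "carrier G"] by simp
  next
    case (Suc j)
    define i where "i = r - Suc j"
    have ir: "r - j = Suc i" "i < r" using Suc.prems by (auto simp: i_def)
    have IH: "(derived G ^^ e (Suc i)) (carrier G) \<subseteq> Xs G A (Ns ! Suc i)"
      using Suc.IH Suc.prems ir by simp
    have sub: "Ns ! i \<subseteq> Ns ! Suc i" and cyc: "cyclic_group ((G\<lparr>carrier := Ns ! Suc i\<rparr>) Mod (Ns ! i))"
      using Nstep[OF ir(2)] by auto
    have ni: "Ns ! i \<lhd> G" and nsi: "Ns ! Suc i \<lhd> G" using Nn ir(2) by auto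
    have "(derived G ^^ e i) (carrier G) \<subseteq> Xs G A (Ns ! i)"
    proof (cases "D \<inter> Ns ! i = D \<inter> Ns ! Suc i")
      case True
      have ee: "e i = e (Suc i)" by (simp add: e_def True)
      have "Xs G A (Ns ! Suc i) \<subseteq> Xs G A (Ns ! i)"
      proof
        fix x assume x: "x \<in> Xs G A (Ns ! Suc i)"
        have xG: "x \<in> carrier G" using x by (simp add: Xs_def)
        show "x \<in> Xs G A (Ns ! i)"
          unfolding Xs_def
        proof (intro CollectI conjI ballI)
          show "x \<in> carrier G" by (rule xG)
          fix a assume a: "a \<in> A"
          have "inv x \<otimes> a \<otimes> x \<otimes> inv a \<in> D \<inter> Ns ! Suc i"
            using commD[OF xG a] x a by (auto simp: Xs_def)
          then show "inv x \<otimes> a \<otimes> x \<otimes> inv a \<in> Ns ! i" using True by blast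
        qed
      qed
      then show ?thesis using IH ee by simp
    next
      case False
      have DS: "D \<inter> Ns ! i \<subseteq> D \<inter> Ns ! Suc i" using sub by auto
      then obtain t where t: "t \<in> D \<inter> Ns ! Suc i" "t \<notin> D \<inter> Ns ! i" using False by blast
      have tG: "t \<in> carrier G" using t DG by auto
      have "eta G (D \<inter> Ns ! i) < eta G (D \<inter> Ns ! Suc i)"
      proof (rule eta_strict[OF fin DS t tG])
        fix g assume g: "g \<in> carrier G"
        show "inv g \<otimes> t \<otimes> g \<in> D \<inter> Ns ! Suc i"
          using Dc[OF g] normal.inv_op_closed1[OF nsi g] t by auto
      qed
      then have le: "Suc (Suc (e (Suc i))) \<le> e i" using etaD[of "Suc i"] by (simp add: e_def)
      have "(derived G ^^ e i) (carrier G) \<subseteq> (derived G ^^ Suc (Suc (e (Suc i)))) (carrier G)"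
        by (rule derived_antitone[OF le])
      also have "\<dots> = derived G (derived G ((derived G ^^ e (Suc i)) (carrier G)))" by simp
      also have "\<dots> \<subseteq> derived G (derived G (Xs G A (Ns ! Suc i)))"
        by (intro mono_derived IH)
      also have "\<dots> \<subseteq> Xs G A (Ns ! i)"
        by (rule step_lemma[OF ni nsi sub cyc AG Ac])
      finally show ?thesis .
    qed
    then show ?case by (simp add: i_def)
  qed
  have "(derived G ^^ e 0) (carrier G) \<subseteq> centralizer G A"
    using claim[of r] by (simp add: centralizer_Xs[OF AG] N0)
  moreover have Cn: "centralizer G A \<lhd> G" by (rule centralizer_normal[OF AG Ac])
  ultimately have dl: "derived_length (G Mod (centralizer G A)) \<le> e 0"
    by (intro dl_quot_le)
  have "D \<inter> Ns ! 0 = {\<one>}" using N0 oneD by auto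
  then have e0: "e 0 = 2 * (eta G D - 1)" by (simp add: e_def eta_one)
  have etaD1: "1 \<le> eta G D" using eta_mono[OF fin, of "{\<one>}" D] oneD eta_one by simp

  obtain z where z: "z \<in> A <#> B" "z \<in> center G" using assms(6) by blast
  obtain a0 b0 where a0: "a0 \<in> A" and b0: "b0 \<in> B" and zab: "z = a0 \<otimes> b0"
    using z(1) unfolding set_mult_def by blast
  have a0G: "a0 \<in> carrier G" and b0G: "b0 \<in> carrier G" using a0 b0 AG BG by auto
  have zG: "z \<in> carrier G" using zab a0G b0G by simp
  have zc: "g \<otimes> z = z \<otimes> g" if g: "g \<in> carrier G" for g
  proof -
    have "inv z \<otimes> g \<otimes> z = g" using z(2) g by (simp add: center_def centralizer_def)
    then have "z \<otimes> (inv z \<otimes> g \<otimes> z) = z \<otimes> g" by simp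
    then show ?thesis using zG g by (simp add: m_assoc)
  qed
  have invuz: "inv u \<otimes> z \<in> B" if u: "u \<in> A" for u
  proof -
    have "a1 \<in> conj_class G a0" using conj_class_sym[of a0 a1] a0 a1 by simp
    then have "conj_class G a1 \<subseteq> conj_class G a0" using conj_class_sub a0G by blast
    then obtain t where t: "t \<in> carrier G" "u = inv t \<otimes> a0 \<otimes> t"
      using u a1 by (auto simp: conj_class_def)
    have b0eq: "inv a0 \<otimes> z = b0" using a0G b0G by (simp add: zab m_assoc[symmetric])
    have "inv u \<otimes> z = inv t \<otimes> inv a0 \<otimes> (t \<otimes> z)"
      using t a0G zG by (simp add: inv_mult_group m_assoc)
    also have "\<dots> = inv t \<otimes> (inv a0 \<otimes> z) \<otimes> t"
      using t a0G zG zc[OF t(1)] by (simp add: m_assoc)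
    also have "\<dots> = inv t \<otimes> b0 \<otimes> t" by (simp add: b0eq)
    finally show ?thesis using Bc[OF t(1) b0] by simp
  qed
  define \<phi> where "\<phi> K = (\<lambda>y. y \<otimes> z) ` K" for K
  have maps: "\<phi> ` {K. is_conj_class G K \<and> K \<subseteq> D} \<subseteq> {K. is_conj_class G K \<and> K \<subseteq> A <#> B}"
  proof
    fix K' assume "K' \<in> \<phi> ` {K. is_conj_class G K \<and> K \<subseteq> D}"
    then obtain K where K: "is_conj_class G K" "K \<subseteq> D" "K' = \<phi> K" by blast
    obtain d where d: "d \<in> carrier G" "K = conj_class G d" using K(1) by (auto simp: is_conj_class_def)
    have eqn: "inv g \<otimes> (d \<otimes> z) \<otimes> g = inv g \<otimes> d \<otimes> g \<otimes> z" if g: "g \<in> carrier G" for g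
    proof -
      have "inv g \<otimes> (d \<otimes> z) \<otimes> g = inv g \<otimes> d \<otimes> (z \<otimes> g)" using g d zG by (simp add: m_assoc)
      also have "\<dots> = inv g \<otimes> d \<otimes> (g \<otimes> z)" using zc[OF g] by simp
      also have "\<dots> = inv g \<otimes> d \<otimes> g \<otimes> z" using g d zG by (simp add: m_assoc)
      finally show ?thesis .
    qed
    have "\<phi> K = conj_class G (d \<otimes> z)"
      unfolding \<phi>_def d(2) conj_class_def by (auto simp: eqn) (metis eqn)
    moreover have "d \<otimes> z \<in> carrier G" using d zG by simp
    ultimately have c1: "is_conj_class G K'" using K(3) by (auto simp: is_conj_class_def)
    have "K' \<subseteq> A <#> B"
    proof
      fix w assume "w \<in> K'"
      then obtain y where y: "y \<in> K" "w = y \<otimes> z" using K(3) by (auto simp: \<phi>_def)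
      then obtain u v where uv: "u \<in> A" "v \<in> A" "y = v \<otimes> inv u" using K(2) by (auto simp: D_def)
      have "u \<in> carrier G" "v \<in> carrier G" using uv AG by auto
      then have "w = v \<otimes> (inv u \<otimes> z)" using zG y uv by (simp add: m_assoc)
      then show "w \<in> A <#> B" using uv invuz[OF uv(1)] unfolding set_mult_def by blast
    qed
    then show "K' \<in> {K. is_conj_class G K \<and> K \<subseteq> A <#> B}" using c1 by simp
  qed
  have inj: "inj_on \<phi> {K. is_conj_class G K \<and> K \<subseteq> D}"
  proof (rule inj_onI)
    fix K1 K2 assume K1: "K1 \<in> {K. is_conj_class G K \<and> K \<subseteq> D}" and K2: "K2 \<in> {K. is_conj_class G K \<and> K \<subseteq> D}"
      and eq: "\<phi> K1 = \<phi> K2"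
    have backK: "(\<lambda>y. y \<otimes> inv z) ` \<phi> K = K" if "K \<subseteq> carrier G" for K
    proof -
      have "(\<lambda>y. y \<otimes> inv z) ` \<phi> K = (\<lambda>y. y \<otimes> z \<otimes> inv z) ` K" by (simp add: \<phi>_def image_image)
      also have "\<dots> = K" using that zG by (auto simp: m_assoc image_iff) (metis subsetD m_assoc r_inv r_one inv_closed)
      finally show ?thesis .
    qed
    have "K1 \<subseteq> carrier G" "K2 \<subseteq> carrier G" using K1 K2 DG by auto
    then show "K1 = K2" using backK eq by metis
  qed
  have "eta G D \<le> eta G (A <#> B)"
    unfolding eta_def by (rule card_inj_on_le[OF inj maps finite_classes[OF fin]])
  then show ?thesis using dl e0 etaD1 by linarith
qed

theorem corollaryC:
  fixes G :: "('a, 'b) monoid_scheme" and A B :: "'a set"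
  assumes "group G" and "finite (carrier G)" and "supersolvable G"
    and "is_conj_class G A" and "is_conj_class G B"
    and "(A <#>\<^bsub>G\<^esub> B) \<inter> center G \<noteq> {}"
  shows "int (derived_length (G Mod (centralizer G A))) \<le> 2 * int (eta G (A <#>\<^bsub>G\<^esub> B)) - 1"
  using group.main_result[OF assms(1) TrueI assms(2-6)] .


end
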